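(* For every feature $f \colon \mathcal{X} \to \mathbb{R}^d$ with $\mathrm{span}\{f\} = \mathcal{G}$, $H(f) = \frac12 \left( \mathbb{E}_{P_{XX'}}[k_{\mathcal{G}}(X, X')] - \mathbb{E}_{P_X P_{X'}}[k_{\mathcal{G}}(X, X')] \right)$, where the joint distribution of $X$ and $X'$ is $P_{XX'}(x, x') = \sum_{y \in \mathcal{Y}} P_Y(y) P_{X|Y=y}(x) P_{X|Y=y}(x')$.
   Context: $X, Y$ are random variables on finite alphabets $\mathcal{X}, \mathcal{Y}$ with joint distribution $P_{X,Y}$ and marginals $P_X, P_Y$. For a $d$-dimensional feature $f$, $\tilde f(x) = f(x) - \mathbb{E}[f(X)]$, $\Lambda_f = \mathbb{E}[f(X) f^T(X)]$, and the H-score is $H(f) = \frac12 \mathbb{E}\left[ \left\| \mathbb{E}[\Lambda_f^{-1/2} \tilde f(X) \mid Y] \right\|^2 \right]$. For a subspace $\mathcal{G}$ of functions $\mathcal{X}\to\mathbb{R}$ with basis $f = (f_1,\dots,f_d)^T$, the projection kernel is $k_{\mathcal{G}}(x, x') = f^T(x) \Lambda_f^{-1} f(x')$. *)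

theory Defs
  imports "HOL-Analysis.Analysis"
begin

text \<open>A joint distribution on finite alphabets is a function P :: 'x \<Rightarrow> 'y \<Rightarrow> real.
  Real functions on the finite alphabet 'x are represented as vectors in real^'x.\<close>

definition is_joint_dist :: "('x::finite \<Rightarrow> 'y::finite \<Rightarrow> real) \<Rightarrow> bool" where
  "is_joint_dist P \<longleftrightarrow> (\<forall>x y. 0 \<le> P x y) \<and> (\<Sum>x\<in>UNIV. \<Sum>y\<in>UNIV. P x y) = 1"

definition PX :: "('x::finite \<Rightarrow> 'y::finite \<Rightarrow> real) \<Rightarrow> 'x \<Rightarrow> real" where
  "PX P x = (\<Sum>y\<in>UNIV. P x y)"

definition PY :: "('x::finite \<Rightarrow> 'y::finite \<Rightarrow> real) \<Rightarrow> 'y \<Rightarrow> real" where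
  "PY P y = (\<Sum>x\<in>UNIV. P x y)"

text \<open>Conditional distribution P_{X|Y=y}(x) (convention: 0 if P_Y(y) = 0).\<close>
definition PXgY :: "('x::finite \<Rightarrow> 'y::finite \<Rightarrow> real) \<Rightarrow> 'y \<Rightarrow> 'x \<Rightarrow> real" where
  "PXgY P y x = P x y / PY P y"

definition meanX :: "('x::finite \<Rightarrow> 'y::finite \<Rightarrow> real) \<Rightarrow> ('x \<Rightarrow> 'v::real_vector) \<Rightarrow> 'v" where
  "meanX P g = (\<Sum>x\<in>UNIV. PX P x *\<^sub>R g x)"

definition condE :: "('x::finite \<Rightarrow> 'y::finite \<Rightarrow> real) \<Rightarrow> ('x \<Rightarrow> 'v::real_vector) \<Rightarrow> 'y \<Rightarrow> 'v" where
  "condE P g y = (\<Sum>x\<in>UNIV. PXgY P y x *\<^sub>R g x)"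

definition Lam :: "('x::finite \<Rightarrow> 'y::finite \<Rightarrow> real) \<Rightarrow> ('x \<Rightarrow> real^'d::finite) \<Rightarrow> real^'d^'d" where
  "Lam P f = (\<chi> i j. \<Sum>x\<in>UNIV. PX P x * (f x $ i) * (f x $ j))"

definition pos_def_mat :: "real^'d::finite^'d \<Rightarrow> bool" where
  "pos_def_mat S \<longleftrightarrow> (\<forall>v. v \<noteq> 0 \<longrightarrow> 0 < v \<bullet> (S *v v))"

definition inv_sqrt :: "real^'d::finite^'d \<Rightarrow> real^'d^'d" where
  "inv_sqrt A = (THE S. transpose S = S \<and> pos_def_mat S \<and> S ** S = matrix_inv A)"

definition Hscore :: "('x::finite \<Rightarrow> 'y::finite \<Rightarrow> real) \<Rightarrow> ('x \<Rightarrow> real^'d::finite) \<Rightarrow> real" where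
  "Hscore P f = 1/2 * (\<Sum>y\<in>UNIV. PY P y *
      (norm (condE P (\<lambda>x. inv_sqrt (Lam P f) *v (f x - meanX P f)) y))\<^sup>2)"

definition comp_fun :: "('x::finite \<Rightarrow> real^'d::finite) \<Rightarrow> 'd \<Rightarrow> real^'x" where
  "comp_fun f i = (\<chi> x. f x $ i)"

definition feature_span :: "('x::finite \<Rightarrow> real^'d::finite) \<Rightarrow> (real^'x) set" where
  "feature_span f = span (range (comp_fun f))"

text \<open>Projection kernel of G computed from a basis b of G: k(x,x') = b(x)^T \<Lambda>_b^{-1} b(x').\<close>
definition proj_kernel :: "('x::finite \<Rightarrow> 'y::finite \<Rightarrow> real) \<Rightarrow> ('x \<Rightarrow> real^'e::finite) \<Rightarrow> 'x \<Rightarrow> 'x \<Rightarrow> real" where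
  "proj_kernel P b x x' = b x \<bullet> (matrix_inv (Lam P b) *v b x')"

definition PXX :: "('x::finite \<Rightarrow> 'y::finite \<Rightarrow> real) \<Rightarrow> 'x \<Rightarrow> 'x \<Rightarrow> real" where
  "PXX P x x' = (\<Sum>y\<in>UNIV. PY P y * PXgY P y x * PXgY P y x')"

end

theory Submission
  imports Defs
begin

lemma sym_dot:
  fixes A :: "real^'n^'n"
  assumes "transpose A = A"
  shows "(A *v x) \<bullet> y = x \<bullet> (A *v y)"
proof -
  have "(A *v x) \<bullet> y = (x v* transpose A) \<bullet> y" by simp
  also have "\<dots> = x \<bullet> (transpose A *v y)" by (rule dot_lmul_matrix)
  finally show ?thesis using assms by simp
qed

lemma quad_zero:
  fixes a b :: real
  assumes "\<forall>t. 0 \<le> 2 * t * a + t^2 * b" "0 \<le> b"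
  shows "a = 0"
proof -
  define t where "t = -a/(b+1)"
  have tb: "t * (b+1) = -a" using assms(2) unfolding t_def by simp
  have ta: "t * a \<le> 0" unfolding t_def using assms(2)
    by (simp add: mult_le_0_iff divide_le_0_iff)
  have "0 \<le> 2 * t * a + t^2 * b" using assms(1) by blast
  also have "2 * t * a + t^2 * b = t * a - t^2"
  proof -
    have tb': "t * b = -a - t" using tb by (simp add: algebra_simps)
    have "2 * t * a + t^2 * b = 2 * t * a + t * (t * b)" by (simp add: power2_eq_square)
    also have "\<dots> = t * a - t^2" unfolding tb' by (simp add: power2_eq_square algebra_simps)
    finally show ?thesis .
  qed
  finally have "t^2 \<le> 0" using ta by linarith
  hence "t = 0" by simp
  thus ?thesis using tb by simp
qed

lemma eigvec_exists:
  fixes A :: "real^'n^'n"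
  assumes sym: "transpose A = A" and S: "subspace S" and inv: "\<forall>x\<in>S. A *v x \<in> S"
    and ne: "S \<noteq> {0}"
  shows "\<exists>v\<in>S. norm v = 1 \<and> A *v v = (v \<bullet> (A *v v)) *\<^sub>R v"
proof -
  let ?K = "S \<inter> sphere 0 1"
  have "compact ?K"
    by (simp add: S closed_Int_compact closed_subspace)
  obtain x where x: "x \<in> S" "x \<noteq> 0" using ne S subspace_0 by blast
  have "x /\<^sub>R norm x \<in> ?K" using x S by (simp add: subspace_scale)
  hence "?K \<noteq> {}" by blast
  have "continuous_on ?K (\<lambda>x. x \<bullet> (A *v x))"
    by (intro continuous_intros)
  then obtain v where v: "v \<in> ?K" and vmax: "\<forall>y\<in>?K. y \<bullet> (A *v y) \<le> v \<bullet> (A *v v)"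
    using continuous_attains_sup[OF \<open>compact ?K\<close> \<open>?K \<noteq> {}\<close>] by blast
  define l where "l = v \<bullet> (A *v v)"
  define B where "B = (\<lambda>y. l *\<^sub>R y - A *v y)"
  have Bpos: "0 \<le> y \<bullet> B y" if "y \<in> S" for y
  proof (cases "y = 0")
    case True then show ?thesis by simp
  next
    case False
    let ?u = "y /\<^sub>R norm y"
    have "?u \<in> ?K" using that False S by (simp add: subspace_scale)
    hence "?u \<bullet> (A *v ?u) \<le> l" using vmax l_def by blast
    hence "y \<bullet> (A *v y) \<le> l * (norm y)^2" using False
      by (simp add: matrix_vector_mult_scaleR field_simps power2_eq_square)
    thus ?thesis unfolding B_def
      by (simp add: inner_diff_right power2_norm_eq_inner)
  qed
  have v0: "v \<bullet> B v = 0" unfolding B_def l_def using v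
    by (simp add: inner_diff_right power2_norm_eq_inner[symmetric])
  have Blin: "B (y + t *\<^sub>R w) = B y + t *\<^sub>R B w" for y w t
    unfolding B_def by (simp add: matrix_vector_right_distrib matrix_vector_mult_scaleR algebra_simps)
  have Bsym: "y \<bullet> B w = w \<bullet> B y" for y w
    unfolding B_def using sym_dot[OF sym, of w y]
    by (simp add: inner_diff_right inner_commute)
  have "B v \<in> S" unfolding B_def using v inv S
    by (simp add: subspace_diff subspace_scale)
  have "w \<bullet> B v = 0" if w: "w \<in> S" for w
  proof (rule quad_zero)
    show "0 \<le> w \<bullet> B w" using Bpos w by blast
    show "\<forall>t. 0 \<le> 2 * t * (w \<bullet> B v) + t^2 * (w \<bullet> B w)"
    proof
      fix t
      have "v + t *\<^sub>R w \<in> S" using v w S by (simp add: subspace_add subspace_scale)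
      hence "0 \<le> (v + t *\<^sub>R w) \<bullet> B (v + t *\<^sub>R w)" using Bpos by blast
      also have "\<dots> = v \<bullet> B v + 2 * t * (w \<bullet> B v) + t^2 * (w \<bullet> B w)"
        unfolding Blin using Bsym[of v w]
        by (simp add: inner_add_left inner_add_right algebra_simps power2_eq_square)
      finally show "0 \<le> 2 * t * (w \<bullet> B v) + t^2 * (w \<bullet> B w)" using v0 by simp
    qed
  qed
  from this[OF \<open>B v \<in> S\<close>] have "B v = 0" by simp
  hence "A *v v = l *\<^sub>R v" unfolding B_def by simp
  thus ?thesis using v l_def by auto
qed

lemma spectral_sub:
  fixes A :: "real^'n^'n"
  assumes sym: "transpose A = A"
  shows "subspace S \<Longrightarrow> (\<forall>x\<in>S. A *v x \<in> S) \<Longrightarrow> dim S = m \<Longrightarrow>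
    \<exists>B. B \<subseteq> S \<and> finite B \<and> (\<forall>v\<in>B. norm v = 1 \<and> A *v v = (v \<bullet> (A *v v)) *\<^sub>R v)
      \<and> (\<forall>v\<in>B. \<forall>w\<in>B. v \<noteq> w \<longrightarrow> v \<bullet> w = 0) \<and> (\<forall>x\<in>S. x = (\<Sum>v\<in>B. (v \<bullet> x) *\<^sub>R v))"
proof (induction m arbitrary: S rule: less_induct)
  case (less m)
  show ?case
  proof (cases "S = {0}")
    case True
    then show ?thesis by (intro exI[of _ "{}"]) auto
  next
    case False
    obtain u where u: "u \<in> S" "norm u = 1" "A *v u = (u \<bullet> (A *v u)) *\<^sub>R u"
      using eigvec_exists[OF sym less.prems(1) less.prems(2) False] by blast
    define l where "l = u \<bullet> (A *v u)"
    define S' where "S' = {x\<in>S. u \<bullet> x = 0}"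
    have sub': "subspace S'" using less.prems(1) unfolding S'_def subspace_def
      by (auto simp: inner_add_right)
    have inv': "\<forall>x\<in>S'. A *v x \<in> S'"
    proof
      fix x assume x: "x \<in> S'"
      have "u \<bullet> (A *v x) = (A *v u) \<bullet> x" using sym_dot[OF sym, of u x] by simp
      also have "\<dots> = (u \<bullet> (A *v u)) * (u \<bullet> x)" by (subst u(3)) simp
      also have "\<dots> = 0" using x unfolding S'_def by simp
      finally show "A *v x \<in> S'" using x less.prems(2) unfolding S'_def by auto
    qed
    have uu: "u \<bullet> u = 1" using u(2) by (simp add: norm_eq_1)
    have "u \<notin> S'" using uu unfolding S'_def by auto
    hence "S' \<subset> S" using u(1) unfolding S'_def by blast
    moreover have sp: "span S' = S'" "span S = S" using sub' less.prems(1) span_eq_iff by blast+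
    ultimately have "span S' \<subset> span S" unfolding sp by blast
    hence "dim S' < m" using dim_psubset less.prems(3) by blast
    then obtain B' where B': "B' \<subseteq> S'" "finite B'"
      "\<forall>v\<in>B'. norm v = 1 \<and> A *v v = (v \<bullet> (A *v v)) *\<^sub>R v"
      "\<forall>v\<in>B'. \<forall>w\<in>B'. v \<noteq> w \<longrightarrow> v \<bullet> w = 0"
      "\<forall>x\<in>S'. x = (\<Sum>v\<in>B'. (v \<bullet> x) *\<^sub>R v)"
      using less.IH[OF _ sub' inv' refl] by blast
    have uB: "u \<notin> B'" using B'(1) uu unfolding S'_def by auto
    have orth: "\<forall>v\<in>B'. u \<bullet> v = 0" using B'(1) unfolding S'_def by auto
    show ?thesis
    proof (intro exI[of _ "insert u B'"] conjI)
      show "insert u B' \<subseteq> S" using B'(1) u(1) unfolding S'_def by auto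
      show "finite (insert u B')" using B'(2) by simp
      show "\<forall>v\<in>insert u B'. norm v = 1 \<and> A *v v = (v \<bullet> (A *v v)) *\<^sub>R v"
        using B'(3) u by auto
      show "\<forall>v\<in>insert u B'. \<forall>w\<in>insert u B'. v \<noteq> w \<longrightarrow> v \<bullet> w = 0"
        using B'(4) orth by (auto simp: inner_commute)
      show "\<forall>x\<in>S. x = (\<Sum>v\<in>insert u B'. (v \<bullet> x) *\<^sub>R v)"
      proof
        fix x assume x: "x \<in> S"
        define x' where "x' = x - (u \<bullet> x) *\<^sub>R u"
        have "x' \<in> S'" unfolding S'_def x'_def using x u(1) less.prems(1) uu
          by (auto simp: subspace_diff subspace_scale inner_diff_right)
        hence ex: "x' = (\<Sum>v\<in>B'. (v \<bullet> x') *\<^sub>R v)" using B'(5) by blast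
        have "(\<Sum>v\<in>B'. (v \<bullet> x') *\<^sub>R v) = (\<Sum>v\<in>B'. (v \<bullet> x) *\<^sub>R v)"
          using orth by (intro sum.cong) (auto simp: x'_def inner_diff_right inner_commute)
        hence "x = (u \<bullet> x) *\<^sub>R u + (\<Sum>v\<in>B'. (v \<bullet> x) *\<^sub>R v)"
          using ex unfolding x'_def by (simp add: algebra_simps)
        thus "x = (\<Sum>v\<in>insert u B'. (v \<bullet> x) *\<^sub>R v)" using B'(2) uB by simp
      qed
    qed
  qed
qed

lemma spectral:
  fixes A :: "real^'n^'n"
  assumes sym: "transpose A = A"
  shows "\<exists>B. finite B \<and> (\<forall>v\<in>B. norm v = 1 \<and> A *v v = (v \<bullet> (A *v v)) *\<^sub>R v)
      \<and> (\<forall>v\<in>B. \<forall>w\<in>B. v \<noteq> w \<longrightarrow> v \<bullet> w = 0) \<and> (\<forall>x. x = (\<Sum>v\<in>B. (v \<bullet> x) *\<^sub>R v))"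
proof -
  have "\<exists>B. B \<subseteq> UNIV \<and> finite B \<and> (\<forall>v\<in>B. norm v = 1 \<and> A *v v = (v \<bullet> (A *v v)) *\<^sub>R v)
      \<and> (\<forall>v\<in>B. \<forall>w\<in>B. v \<noteq> w \<longrightarrow> v \<bullet> w = 0) \<and> (\<forall>x\<in>UNIV. x = (\<Sum>v\<in>B. (v \<bullet> x) *\<^sub>R v))"
    by (rule spectral_sub[OF sym subspace_UNIV _ refl]) simp
  thus ?thesis by simp
qed

lemma orthonormal_delta:
  assumes "\<forall>v\<in>B. norm v = 1" "\<forall>v\<in>B. \<forall>w\<in>B. v \<noteq> w \<longrightarrow> v \<bullet> w = 0"
    and "v \<in> B" "w \<in> B"
  shows "w \<bullet> v = (if w = v then 1 else 0)"
  using assms by (auto simp: norm_eq_1)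

lemma sum_single_vec:
  fixes g :: "real^'n \<Rightarrow> real"
  assumes fin: "finite B" and on: "\<forall>v\<in>B. norm v = 1" "\<forall>v\<in>B. \<forall>w\<in>B. v \<noteq> w \<longrightarrow> v \<bullet> w = 0"
    and v: "v \<in> B"
  shows "(\<Sum>w\<in>B. (g w * (w \<bullet> v)) *\<^sub>R w) = g v *\<^sub>R v"
proof -
  have "(\<Sum>w\<in>B. (g w * (w \<bullet> v)) *\<^sub>R w) = (\<Sum>w\<in>B. if w = v then g v *\<^sub>R v else 0)"
    using orthonormal_delta[OF on v] by (intro sum.cong) auto
  also have "\<dots> = g v *\<^sub>R v" using fin v by simp
  finally show ?thesis .
qed

lemma sqrt_exists:
  fixes M :: "real^'n^'n"
  assumes sym: "transpose M = M" and pd: "pos_def_mat M"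
  shows "\<exists>S. transpose S = S \<and> pos_def_mat S \<and> S ** S = M"
proof -
  obtain B where fin: "finite B" and ev: "\<forall>v\<in>B. norm v = 1 \<and> M *v v = (v \<bullet> (M *v v)) *\<^sub>R v"
    and orth: "\<forall>v\<in>B. \<forall>w\<in>B. v \<noteq> w \<longrightarrow> v \<bullet> w = 0"
    and exp: "\<forall>x. x = (\<Sum>v\<in>B. (v \<bullet> x) *\<^sub>R v)"
    using spectral[OF sym] by blast
  have on: "\<forall>v\<in>B. norm v = 1" using ev by blast
  define lam where "lam v = v \<bullet> (M *v v)" for v
  have lampos: "lam v > 0" if "v \<in> B" for v
  proof -
    have "v \<noteq> 0" using on that by auto
    thus ?thesis using pd unfolding pos_def_mat_def lam_def by blast
  qed
  have eig: "M *v v = lam v *\<^sub>R v" if "v \<in> B" for v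
    unfolding lam_def by (rule conjunct2[OF bspec[OF ev that]])
  define sq where "sq v = sqrt (lam v)" for v
  define S :: "real^'n^'n" where "S = (\<chi> i j. \<Sum>v\<in>B. sq v * v$i * v$j)"
  have Sx: "S *v x = (\<Sum>v\<in>B. (sq v * (v \<bullet> x)) *\<^sub>R v)" for x
    unfolding S_def
    by (simp add: vec_eq_iff matrix_vector_mult_def inner_vec_def sum_distrib_left sum_distrib_right
        algebra_simps sum.swap[of _ B])
  have Sst: "transpose S = S" unfolding S_def transpose_def
    by (simp add: vec_eq_iff mult.commute mult.left_commute)
  have Sv: "S *v v = sq v *\<^sub>R v" if "v \<in> B" for v
    unfolding Sx using sum_single_vec[OF fin on orth that, of sq] by (simp add: inner_commute)
  have Spd: "pos_def_mat S" unfolding pos_def_mat_def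
  proof (intro allI impI)
    fix x :: "real^'n" assume "x \<noteq> 0"
    have "\<exists>v\<in>B. v \<bullet> x \<noteq> 0"
    proof (rule ccontr)
      assume "\<not> ?thesis"
      hence "(\<Sum>v\<in>B. (v \<bullet> x) *\<^sub>R v) = 0" by simp
      thus False using exp[rule_format, of x] \<open>x \<noteq> 0\<close> by simp
    qed
    then obtain v where v: "v \<in> B" "v \<bullet> x \<noteq> 0" by blast
    have nn: "\<forall>w\<in>B. 0 \<le> sq w * (w \<bullet> x)^2" using lampos sq_def by (simp add: less_imp_le)
    have "x \<bullet> (S *v x) = (\<Sum>w\<in>B. sq w * (w \<bullet> x)^2)"
      unfolding Sx by (simp add: inner_sum_right power2_eq_square inner_commute mult.assoc)
    also have "\<dots> \<ge> sq v * (v \<bullet> x)^2"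
      using member_le_sum[of v B "\<lambda>w. sq w * (w \<bullet> x)^2"] v(1) nn fin by blast
    finally show "0 < x \<bullet> (S *v x)" using v lampos[OF v(1)] sq_def
      by (smt (verit) mult_pos_pos real_sqrt_gt_0_iff zero_less_power2)
  qed
  have "S ** S = M" unfolding matrix_eq
  proof
    fix x :: "real^'n"
    have vS: "v \<bullet> (S *v x) = sq v * (v \<bullet> x)" if "v \<in> B" for v
      using sym_dot[OF Sst, of v x] Sv[OF that] by simp
    have vM: "v \<bullet> (M *v x) = lam v * (v \<bullet> x)" if "v \<in> B" for v
      using sym_dot[OF sym, of v x] eig[OF that] by simp
    have "(S ** S) *v x = S *v (S *v x)" by (simp add: matrix_vector_mul_assoc)
    also have "\<dots> = (\<Sum>v\<in>B. (sq v * (sq v * (v \<bullet> x))) *\<^sub>R v)"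
      unfolding Sx[of "S *v x"] using vS by (intro sum.cong) auto
    also have "\<dots> = (\<Sum>v\<in>B. (lam v * (v \<bullet> x)) *\<^sub>R v)"
      using lampos by (intro sum.cong) (auto simp: sq_def mult.assoc[symmetric] less_imp_le)
    also have "\<dots> = (\<Sum>v\<in>B. (v \<bullet> (M *v x)) *\<^sub>R v)" using vM by simp
    also have "\<dots> = M *v x" by (rule exp[rule_format, symmetric])
    finally show "(S ** S) *v x = M *v x" .
  qed
  thus ?thesis using Sst Spd by blast
qed

lemma sqrt_unique:
  fixes S T :: "real^'n^'n"
  assumes sS: "transpose S = S" and pS: "pos_def_mat S"
    and sT: "transpose T = T" and pT: "pos_def_mat T" and eq: "S ** S = T ** T"
  shows "S = T"
proof -
  obtain B where fin: "finite B" and ev: "\<forall>v\<in>B. norm v = 1 \<and> T *v v = (v \<bullet> (T *v v)) *\<^sub>R v"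
    and exp: "\<forall>x. x = (\<Sum>v\<in>B. (v \<bullet> x) *\<^sub>R v)"
    using spectral[OF sT] by blast
  have SvTv: "S *v v = T *v v" if v: "v \<in> B" for v
  proof -
    define mu where "mu = v \<bullet> (T *v v)"
    have Tv: "T *v v = mu *\<^sub>R v" unfolding mu_def by (rule conjunct2[OF bspec[OF ev v]])
    have "norm v = 1" by (rule conjunct1[OF bspec[OF ev v]])
    hence "v \<noteq> 0" by auto
    hence mupos: "mu > 0" using pT unfolding pos_def_mat_def mu_def by blast
    define w where "w = S *v v - mu *\<^sub>R v"
    have "S *v (S *v v) = T *v (T *v v)" using eq by (simp add: matrix_vector_mul_assoc)
    also have "\<dots> = (mu * mu) *\<^sub>R v" unfolding Tv by (simp add: matrix_vector_mult_scaleR Tv)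
    finally have SSv: "S *v (S *v v) = (mu * mu) *\<^sub>R v" .
    have "S *v w = (mu * mu) *\<^sub>R v - mu *\<^sub>R (S *v v)" unfolding w_def
      by (simp add: matrix_vector_mult_diff_distrib matrix_vector_mult_scaleR SSv)
    also have "\<dots> = - (mu *\<^sub>R w)" unfolding w_def by (simp add: algebra_simps)
    finally have Sw: "S *v w = - (mu *\<^sub>R w)" .
    have "w = 0"
    proof (rule ccontr)
      assume "w \<noteq> 0"
      hence "0 < w \<bullet> (S *v w)" using pS unfolding pos_def_mat_def by blast
      also have "w \<bullet> (S *v w) = - (mu * (w \<bullet> w))" unfolding Sw by simp
      finally have "0 < - (mu * (w \<bullet> w))" .
      moreover have "0 \<le> mu * (w \<bullet> w)" using mupos by simp
      ultimately show False by linarith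
    qed
    thus ?thesis unfolding w_def using Tv by simp
  qed
  show ?thesis unfolding matrix_eq
  proof
    fix x
    have "S *v x = (\<Sum>v\<in>B. (v \<bullet> (S *v x)) *\<^sub>R v)" by (rule exp[rule_format])
    also have "\<dots> = (\<Sum>v\<in>B. (v \<bullet> (T *v x)) *\<^sub>R v)"
    proof (intro sum.cong refl)
      fix v assume "v \<in> B"
      have "v \<bullet> (S *v x) = (S *v v) \<bullet> x" using sym_dot[OF sS, of v x] by simp
      also have "\<dots> = (T *v v) \<bullet> x" using SvTv[OF \<open>v \<in> B\<close>] by simp
      also have "\<dots> = v \<bullet> (T *v x)" using sym_dot[OF sT, of v x] by simp
      finally show "(v \<bullet> (S *v x)) *\<^sub>R v = (v \<bullet> (T *v x)) *\<^sub>R v" by simp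
    qed
    also have "\<dots> = T *v x" by (rule exp[rule_format, symmetric])
    finally show "S *v x = T *v x" .
  qed
qed

lemma inv_sqrt_props:
  fixes A :: "real^'n^'n"
  assumes sym: "transpose (matrix_inv A) = matrix_inv A" and pd: "pos_def_mat (matrix_inv A)"
  shows "transpose (inv_sqrt A) = inv_sqrt A \<and> pos_def_mat (inv_sqrt A) \<and> inv_sqrt A ** inv_sqrt A = matrix_inv A"
proof -
  have "\<exists>!S. transpose S = S \<and> pos_def_mat S \<and> S ** S = matrix_inv A"
    using sqrt_exists[OF sym pd] sqrt_unique by metis
  thus ?thesis unfolding inv_sqrt_def by (rule theI')
qed

lemma mv_sum: "finite X \<Longrightarrow> (A::real^'n^'m) *v (\<Sum>x\<in>X. g x) = (\<Sum>x\<in>X. A *v g x)"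
  by (induction rule: finite_induct) (simp_all add: matrix_vector_right_distrib)

lemma LamV: "Lam P h *v v = (\<Sum>x\<in>UNIV. (PX P x * (h x \<bullet> v)) *\<^sub>R h x)"
proof -
  have "(Lam P h *v v) $ i = (\<Sum>x\<in>UNIV. (PX P x * (h x \<bullet> v)) *\<^sub>R h x) $ i" for i
  proof -
    have "(Lam P h *v v) $ i = (\<Sum>j\<in>UNIV. \<Sum>x\<in>UNIV. PX P x * h x $ i * h x $ j * v $ j)"
      by (simp add: matrix_vector_mult_def Lam_def sum_distrib_right)
    also have "\<dots> = (\<Sum>x\<in>UNIV. \<Sum>j\<in>UNIV. PX P x * h x $ i * h x $ j * v $ j)"
      by (rule sum.swap)
    also have "\<dots> = (\<Sum>x\<in>UNIV. (PX P x * (h x \<bullet> v)) * h x $ i)"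
      by (simp add: inner_vec_def sum_distrib_left sum_distrib_right mult_ac)
    finally show ?thesis by simp
  qed
  thus ?thesis by (simp add: vec_eq_iff)
qed

lemma Lam_sym: "transpose (Lam P h) = Lam P h"
  by (simp add: transpose_def Lam_def vec_eq_iff mult_ac)

lemma PX_nonneg: "is_joint_dist P \<Longrightarrow> 0 \<le> PX P x"
  unfolding is_joint_dist_def PX_def by (simp add: sum_nonneg)

lemma Lam_pd:
  fixes P :: "'x::finite \<Rightarrow> 'y::finite \<Rightarrow> real" and h :: "'x \<Rightarrow> real^'d::finite"
  assumes P: "is_joint_dist P" and inv: "invertible (Lam P h)"
  shows "pos_def_mat (Lam P h)"
  unfolding pos_def_mat_def
proof (intro allI impI)
  fix v :: "real^'d" assume v: "v \<noteq> 0"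
  have q: "v \<bullet> (Lam P h *v v) = (\<Sum>x\<in>UNIV. PX P x * (h x \<bullet> v)^2)"
    unfolding LamV by (simp add: inner_sum_right power2_eq_square inner_commute mult_ac)
  have nn: "\<forall>x\<in>UNIV. 0 \<le> PX P x * (h x \<bullet> v)^2" using PX_nonneg[OF P] by simp
  show "0 < v \<bullet> (Lam P h *v v)"
  proof (rule ccontr)
    assume "\<not> ?thesis"
    moreover have "0 \<le> (\<Sum>x\<in>UNIV. PX P x * (h x \<bullet> v)^2)" using nn by (simp add: sum_nonneg)
    ultimately have "(\<Sum>x\<in>UNIV. PX P x * (h x \<bullet> v)^2) = 0" using q by linarith
    hence "\<forall>x\<in>UNIV. PX P x * (h x \<bullet> v)^2 = 0" using nn by (simp add: sum_nonneg_eq_0_iff)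
    hence "\<forall>x. PX P x * (h x \<bullet> v) = 0" by simp
    hence z: "\<forall>x\<in>UNIV. (PX P x * (h x \<bullet> v)) *\<^sub>R h x = 0" by auto
    have "(\<Sum>x\<in>UNIV. (PX P x * (h x \<bullet> v)) *\<^sub>R h x) = 0" by (rule sum.neutral[OF z])
    hence "Lam P h *v v = Lam P h *v 0" unfolding LamV by simp
    hence "v = 0" using inj_matrix_vector_mult[OF inv] unfolding inj_def by blast
    thus False using v by simp
  qed
qed

lemma minv_props:
  assumes "invertible (A::real^'n^'n)"
  shows "A ** matrix_inv A = mat 1" "matrix_inv A ** A = mat 1"
proof -
  have "\<exists>A'. A ** A' = mat 1 \<and> A' ** A = mat 1" using assms unfolding invertible_def by blast
  hence "A ** matrix_inv A = mat 1 \<and> matrix_inv A ** A = mat 1"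
    unfolding matrix_inv_def by (rule someI_ex)
  thus "A ** matrix_inv A = mat 1" "matrix_inv A ** A = mat 1" by auto
qed

lemma minv_sym:
  assumes inv: "invertible (A::real^'n^'n)" and sym: "transpose A = A"
  shows "transpose (matrix_inv A) = matrix_inv A"
proof -
  let ?N = "matrix_inv A"
  have "transpose ?N ** A = mat 1"
    using minv_props(1)[OF inv] sym by (metis matrix_transpose_mul transpose_mat)
  hence "transpose ?N = transpose ?N ** (A ** ?N)"
    using minv_props(1)[OF inv] by (simp add: matrix_mul_rid)
  also have "\<dots> = (transpose ?N ** A) ** ?N" by (simp add: matrix_mul_assoc)
  also have "\<dots> = ?N" using \<open>transpose ?N ** A = mat 1\<close> by (simp add: matrix_mul_lid)
  finally show ?thesis .
qed

lemma minv_pd: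
  assumes inv: "invertible (A::real^'n^'n)" and pd: "pos_def_mat A"
  shows "pos_def_mat (matrix_inv A)"
  unfolding pos_def_mat_def
proof (intro allI impI)
  fix v :: "real^'n" assume v: "v \<noteq> 0"
  define u where "u = matrix_inv A *v v"
  have Au: "A *v u = v" unfolding u_def
    by (simp add: matrix_vector_mul_assoc minv_props(1)[OF inv])
  have "u \<noteq> 0" using Au v by auto
  hence "0 < u \<bullet> (A *v u)" using pd unfolding pos_def_mat_def by blast
  thus "0 < v \<bullet> (matrix_inv A *v v)" using Au u_def by (simp add: inner_commute)
qed

lemma reprod:
  fixes P :: "'x::finite \<Rightarrow> 'y::finite \<Rightarrow> real" and h :: "'x \<Rightarrow> real^'d::finite"
  assumes inv: "invertible (Lam P h)"
  shows "(\<Sum>x'\<in>UNIV. PX P x' * proj_kernel P h x x' * (h x' \<bullet> c)) = h x \<bullet> c"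
proof -
  let ?M = "matrix_inv (Lam P h)"
  have Ms: "transpose ?M = ?M" by (rule minv_sym[OF inv Lam_sym])
  have k: "proj_kernel P h x x' = (?M *v h x) \<bullet> h x'" for x'
    unfolding proj_kernel_def using sym_dot[OF Ms, of "h x" "h x'"] by simp
  have "(\<Sum>x'\<in>UNIV. PX P x' * proj_kernel P h x x' * (h x' \<bullet> c))
      = (?M *v h x) \<bullet> (\<Sum>x'\<in>UNIV. (PX P x' * (h x' \<bullet> c)) *\<^sub>R h x')"
    unfolding k by (simp add: inner_sum_right mult_ac)
  also have "\<dots> = (?M *v h x) \<bullet> (Lam P h *v c)" unfolding LamV ..
  also have "\<dots> = h x \<bullet> (?M *v (Lam P h *v c))" by (rule sym_dot[OF Ms])
  also have "\<dots> = h x \<bullet> c" by (simp add: matrix_vector_mul_assoc minv_props(2)[OF inv])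
  finally show ?thesis .
qed

lemma kernel_sym:
  fixes P :: "'x::finite \<Rightarrow> 'y::finite \<Rightarrow> real" and h :: "'x \<Rightarrow> real^'d::finite"
  assumes inv: "invertible (Lam P h)"
  shows "proj_kernel P h x x' = proj_kernel P h x' x"
proof -
  let ?M = "matrix_inv (Lam P h)"
  have Ms: "transpose ?M = ?M" by (rule minv_sym[OF inv Lam_sym])
  show ?thesis unfolding proj_kernel_def using sym_dot[OF Ms, of "h x" "h x'"]
    by (simp add: inner_commute)
qed

lemma span_rep:
  fixes h :: "'x::finite \<Rightarrow> real^'d::finite"
  shows "g \<in> feature_span h \<longleftrightarrow> (\<exists>c. \<forall>x. g $ x = h x \<bullet> c)"
proof
  assume "g \<in> feature_span h"
  hence "g \<in> span (range (comp_fun h))" unfolding feature_span_def .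
  thus "\<exists>c. \<forall>x. g $ x = h x \<bullet> c"
  proof (induction rule: span_induct)
    case base
    show ?case unfolding subspace_def
    proof (intro conjI ballI allI)
      show "0 \<in> {g. \<exists>c. \<forall>x. g $ x = h x \<bullet> c}" by (auto intro: exI[of _ 0])
    next
      fix a b assume "a \<in> {g. \<exists>c. \<forall>x. g $ x = h x \<bullet> c}" "b \<in> {g. \<exists>c. \<forall>x. g $ x = h x \<bullet> c}"
      then obtain ca cb where "\<forall>x. a $ x = h x \<bullet> ca" "\<forall>x. b $ x = h x \<bullet> cb" by blast
      thus "a + b \<in> {g. \<exists>c. \<forall>x. g $ x = h x \<bullet> c}"
        by (auto intro!: exI[of _ "ca + cb"] simp: inner_add_right)
    next
      fix r a assume "a \<in> {g. \<exists>c. \<forall>x. g $ x = h x \<bullet> c}"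
      then obtain ca where "\<forall>x. a $ x = h x \<bullet> ca" by blast
      thus "r *\<^sub>R a \<in> {g. \<exists>c. \<forall>x. g $ x = h x \<bullet> c}"
        by (auto intro!: exI[of _ "r *\<^sub>R ca"])
    qed
  next
    case (step x)
    then obtain i where "x = comp_fun h i" by blast
    then show ?case
      by (intro exI[of _ "axis i 1"]) (simp add: comp_fun_def inner_axis)
  qed
next
  assume "\<exists>c. \<forall>x. g $ x = h x \<bullet> c"
  then obtain c where c: "\<forall>x. g $ x = h x \<bullet> c" by blast
  have "g = (\<Sum>i\<in>UNIV. (c $ i) *\<^sub>R comp_fun h i)"
    using c by (simp add: vec_eq_iff comp_fun_def inner_vec_def mult.commute)
  also have "\<dots> \<in> span (range (comp_fun h))"
    by (intro span_sum span_scale span_base) auto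
  finally show "g \<in> feature_span h" unfolding feature_span_def .
qed

lemma kernel_eq:
  fixes P :: "'x::finite \<Rightarrow> 'y::finite \<Rightarrow> real"
    and b :: "'x \<Rightarrow> real^'e::finite" and f :: "'x \<Rightarrow> real^'d::finite"
  assumes sp: "feature_span b = feature_span f"
    and ib: "invertible (Lam P b)" and iff: "invertible (Lam P f)"
  shows "proj_kernel P b x z = proj_kernel P f x z"
proof -
  let ?Mb = "matrix_inv (Lam P b)" and ?Mf = "matrix_inv (Lam P f)"
  have Mbs: "transpose ?Mb = ?Mb" by (rule minv_sym[OF ib Lam_sym])
  have "(\<chi> x'. proj_kernel P b x x') \<in> feature_span b"
    unfolding span_rep proj_kernel_def
    by (intro exI[of _ "?Mb *v b x"]) (simp, metis inner_commute sym_dot[OF Mbs])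
  hence "(\<chi> x'. proj_kernel P b x x') \<in> feature_span f" using sp by simp
  then obtain c1 where c1: "\<forall>x'. proj_kernel P b x x' = f x' \<bullet> c1"
    unfolding span_rep by auto
  have "(\<chi> x'. proj_kernel P f x' z) \<in> feature_span f"
    unfolding span_rep proj_kernel_def
    by (intro exI[of _ "?Mf *v f z"]) simp
  hence "(\<chi> x'. proj_kernel P f x' z) \<in> feature_span b" using sp by simp
  then obtain c2 where c2: "\<forall>x'. proj_kernel P f x' z = b x' \<bullet> c2"
    unfolding span_rep by auto
  have "proj_kernel P b x z = f z \<bullet> c1" using c1 by simp
  also have "\<dots> = (\<Sum>x'\<in>UNIV. PX P x' * proj_kernel P f z x' * (f x' \<bullet> c1))"
    by (rule reprod[OF iff, symmetric])
  also have "\<dots> = (\<Sum>x'\<in>UNIV. PX P x' * proj_kernel P b x x' * (b x' \<bullet> c2))"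
    using c1 c2 kernel_sym[OF iff] by (intro sum.cong refl) (metis mult.commute mult.left_commute)
  also have "\<dots> = b x \<bullet> c2" by (rule reprod[OF ib])
  also have "\<dots> = proj_kernel P f x z" using c2 by simp
  finally show ?thesis .
qed

lemma PY_PXgY:
  assumes P: "is_joint_dist P"
  shows "PY P y * PXgY P y x = P x y"
proof (cases "PY P y = 0")
  case True
  have nn: "\<forall>x. 0 \<le> P x y" using P unfolding is_joint_dist_def by blast
  have "P x y \<le> PY P y" unfolding PY_def
    using member_le_sum[of x UNIV "\<lambda>x. P x y"] nn by simp
  hence "P x y = 0" using True nn by (metis antisym)
  thus ?thesis using True by simp
next
  case False
  thus ?thesis unfolding PXgY_def by simp
qed

lemma sum_PY: "is_joint_dist P \<Longrightarrow> (\<Sum>y\<in>UNIV. PY P y) = 1"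
  unfolding is_joint_dist_def PY_def by (metis sum.swap)

lemma sum_PXgY: "PY P y \<noteq> 0 \<Longrightarrow> (\<Sum>x\<in>UNIV. PXgY P y x) = 1"
  unfolding PXgY_def by (simp add: sum_divide_distrib[symmetric] PY_def[symmetric])

lemma mean_cond:
  fixes P :: "'x::finite \<Rightarrow> 'y::finite \<Rightarrow> real" and f :: "'x \<Rightarrow> real^'d::finite"
  assumes P: "is_joint_dist P"
  shows "(\<Sum>y\<in>UNIV. PY P y *\<^sub>R condE P f y) = meanX P f"
proof -
  have "(\<Sum>y\<in>UNIV. PY P y *\<^sub>R condE P f y) = (\<Sum>y\<in>UNIV. \<Sum>x\<in>UNIV. P x y *\<^sub>R f x)"
    unfolding condE_def by (simp add: scaleR_sum_right PY_PXgY[OF P])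
  also have "\<dots> = (\<Sum>x\<in>UNIV. \<Sum>y\<in>UNIV. P x y *\<^sub>R f x)" by (rule sum.swap)
  also have "\<dots> = meanX P f" unfolding meanX_def PX_def by (simp add: scaleR_sum_left)
  finally show ?thesis .
qed

lemma bil:
  fixes M :: "real^'n^'n"
  assumes "finite Y"
  shows "(\<Sum>x\<in>X. a x *\<^sub>R u x) \<bullet> (M *v (\<Sum>x'\<in>Y. c x' *\<^sub>R w x'))
    = (\<Sum>x\<in>X. \<Sum>x'\<in>Y. a x * c x' * (u x \<bullet> (M *v w x')))"
  by (simp add: mv_sum[OF assms] matrix_vector_mult_scaleR inner_sum_left inner_sum_right
      sum_distrib_left mult_ac) (rule sum.swap)

lemma swap3:
  "(\<Sum>y\<in>A. \<Sum>x\<in>B. \<Sum>z\<in>C. F y x z) = (\<Sum>x\<in>B. \<Sum>z\<in>C. \<Sum>y\<in>A. (F y x z :: real))"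
proof -
  have "(\<Sum>y\<in>A. \<Sum>x\<in>B. \<Sum>z\<in>C. F y x z) = (\<Sum>x\<in>B. \<Sum>y\<in>A. \<Sum>z\<in>C. F y x z)"
    by (rule sum.swap)
  also have "\<dots> = (\<Sum>x\<in>B. \<Sum>z\<in>C. \<Sum>y\<in>A. F y x z)"
    by (intro sum.cong refl) (rule sum.swap)
  finally show ?thesis .
qed

theorem proposition2:
  fixes P :: "'x::finite \<Rightarrow> 'y::finite \<Rightarrow> real"
    and G :: "(real^'x) set"
    and b :: "'x \<Rightarrow> real^'e::finite"
    and f :: "'x \<Rightarrow> real^'d::finite"
  assumes P: "is_joint_dist P"
    and b_basis: "feature_span b = G" "invertible (Lam P b)"
    and f_span: "feature_span f = G"
    and f_inv: "invertible (Lam P f)"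
  shows "Hscore P f =
    1/2 * ((\<Sum>x\<in>UNIV. \<Sum>x'\<in>UNIV. PXX P x x' * proj_kernel P b x x')
         - (\<Sum>x\<in>UNIV. \<Sum>x'\<in>UNIV. PX P x * PX P x' * proj_kernel P b x x'))"
proof -
  have Keq: "proj_kernel P b x z = proj_kernel P f x z" for x z
    using kernel_eq[of b f P x z] b_basis f_span f_inv by simp
  define M where "M = matrix_inv (Lam P f)"
  define S where "S = inv_sqrt (Lam P f)"
  define m where "m = meanX P f"
  define g where "g y = condE P f y" for y
  define Q where "Q u v = u \<bullet> (M *v v)" for u v
  have Ms: "transpose M = M" unfolding M_def by (rule minv_sym[OF f_inv Lam_sym])
  have Mpd: "pos_def_mat M" unfolding M_def by (rule minv_pd[OF f_inv Lam_pd[OF P f_inv]])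
  have Sp: "transpose S = S" "S ** S = M"
    using inv_sqrt_props[of "Lam P f"] Ms Mpd unfolding M_def S_def by auto
  have Qsym: "Q u v = Q v u" for u v
    unfolding Q_def using sym_dot[OF Ms, of v u] by (simp add: inner_commute)
  have K: "proj_kernel P f x x' = Q (f x) (f x')" for x x'
    unfolding proj_kernel_def Q_def M_def ..
  have step1: "(norm (condE P (\<lambda>x. S *v (f x - m)) y))^2 = Q (condE P (\<lambda>x. f x - m) y) (condE P (\<lambda>x. f x - m) y)" for y
  proof -
    let ?c = "condE P (\<lambda>x. f x - m) y"
    have "condE P (\<lambda>x. S *v (f x - m)) y = S *v ?c"
      unfolding condE_def by (simp add: mv_sum matrix_vector_mult_scaleR)
    hence "(norm (condE P (\<lambda>x. S *v (f x - m)) y))^2 = (S *v ?c) \<bullet> (S *v ?c)"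
      by (simp add: power2_norm_eq_inner)
    also have "\<dots> = ?c \<bullet> (S *v (S *v ?c))" by (rule sym_dot[OF Sp(1)])
    also have "\<dots> = Q ?c ?c" unfolding Q_def by (simp add: matrix_vector_mul_assoc Sp(2))
    finally show ?thesis .
  qed
  have step2: "PY P y * Q (condE P (\<lambda>x. f x - m) y) (condE P (\<lambda>x. f x - m) y)
      = PY P y * (Q (g y) (g y) - 2 * Q m (g y) + Q m m)" for y
  proof (cases "PY P y = 0")
    case True then show ?thesis by simp
  next
    case False
    have "condE P (\<lambda>x. f x - m) y = g y - (\<Sum>x\<in>UNIV. PXgY P y x) *\<^sub>R m"
      unfolding condE_def g_def by (simp add: scaleR_diff_right sum_subtractf scaleR_sum_left)
    hence c: "condE P (\<lambda>x. f x - m) y = g y - m" using sum_PXgY[OF False] by simp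
    have "Q (g y - m) (g y - m) = Q (g y) (g y) - Q (g y) m - Q m (g y) + Q m m"
      unfolding Q_def by (simp add: inner_diff_left inner_diff_right matrix_vector_mult_diff_distrib)
    also have "\<dots> = Q (g y) (g y) - 2 * Q m (g y) + Q m m" using Qsym[of "g y" m] by simp
    finally show ?thesis unfolding c by simp
  qed
  have sumQ: "(\<Sum>y\<in>UNIV. PY P y * Q m (g y)) = Q m m"
  proof -
    have "(\<Sum>y\<in>UNIV. PY P y * Q m (g y)) = Q m (\<Sum>y\<in>UNIV. PY P y *\<^sub>R g y)"
      unfolding Q_def by (simp add: mv_sum matrix_vector_mult_scaleR inner_sum_right)
    also have "(\<Sum>y\<in>UNIV. PY P y *\<^sub>R g y) = m" unfolding g_def m_def by (rule mean_cond[OF P])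
    finally show ?thesis .
  qed
  have "2 * Hscore P f = (\<Sum>y\<in>UNIV. PY P y * Q (condE P (\<lambda>x. f x - m) y) (condE P (\<lambda>x. f x - m) y))"
    unfolding Hscore_def using step1 m_def S_def by simp
  also have "\<dots> = (\<Sum>y\<in>UNIV. PY P y * (Q (g y) (g y) - 2 * Q m (g y) + Q m m))"
    by (rule sum.cong[OF refl]) (rule step2)
  also have "\<dots> = (\<Sum>y\<in>UNIV. PY P y * Q (g y) (g y)) - 2 * (\<Sum>y\<in>UNIV. PY P y * Q m (g y))
      + (\<Sum>y\<in>UNIV. PY P y) * Q m m"
    by (simp add: algebra_simps sum.distrib sum_subtractf sum_distrib_left sum_distrib_right)
  also have "\<dots> = (\<Sum>y\<in>UNIV. PY P y * Q (g y) (g y)) - Q m m"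
    using sumQ sum_PY[OF P] by simp
  finally have L: "2 * Hscore P f = (\<Sum>y\<in>UNIV. PY P y * Q (g y) (g y)) - Q m m" .
  have R1: "(\<Sum>y\<in>UNIV. PY P y * Q (g y) (g y)) = (\<Sum>x\<in>UNIV. \<Sum>x'\<in>UNIV. PXX P x x' * proj_kernel P b x x')"
  proof -
    have "(\<Sum>y\<in>UNIV. PY P y * Q (g y) (g y))
        = (\<Sum>y\<in>UNIV. \<Sum>x\<in>UNIV. \<Sum>x'\<in>UNIV. PY P y * PXgY P y x * PXgY P y x' * Q (f x) (f x'))"
      unfolding g_def condE_def Q_def by (simp add: bil sum_distrib_left mult_ac)
    also have "\<dots> = (\<Sum>x\<in>UNIV. \<Sum>x'\<in>UNIV. \<Sum>y\<in>UNIV. PY P y * PXgY P y x * PXgY P y x' * Q (f x) (f x'))"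
      by (rule swap3)
    also have "\<dots> = (\<Sum>x\<in>UNIV. \<Sum>x'\<in>UNIV. PXX P x x' * proj_kernel P b x x')"
      unfolding PXX_def Keq K by (simp add: sum_distrib_right)
    finally show ?thesis .
  qed
  have R2: "Q m m = (\<Sum>x\<in>UNIV. \<Sum>x'\<in>UNIV. PX P x * PX P x' * proj_kernel P b x x')"
    unfolding m_def meanX_def Q_def Keq K by (simp add: bil)
  show ?thesis using L R1 R2 by simp
qed

end
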